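(* Let $m,n\ge 2$, let $W'$ be a channel from $\{1,\dots,m\}$ to $\{1,2\}$, and let $W''$ be a channel from $\{1,2\}$ to $\{1,\dots,n\}$ with $W''_{1,*}\ne W''_{2,*}$; set $W=W'W''$. Let $\mathcal{S}$ be a finite set, $p_S$ a probability distribution on $\mathcal{S}$, and $K^{(s)}$ ($s\in\mathcal{S}$) channels from $\{1,\dots,m\}$ to $\{1,2\}$ such that $W'=\sum_{s\in\mathcal{S}}p_S(s)K^{(s)}$. Define the channel $V$ from the set $\{1,\dots,m\}^{\mathcal{S}}$ of maps $u:\mathcal{S}\to\{1,\dots,m\}$ to $\{1,\dots,n\}$ by $V_{u,*}=\big(\sum_{s}p_S(s)K^{(s)}_{u(s),*}\big)W''$, so that $C(V)$ is the capacity of the state-dependent channel $x,s\mapsto (K^{(s)}W'')_{x,*}$ with the state $S\sim p_S$ available causally at the encoder. Then $C(V)=C(W)$ (the causal state information at the encoder does not increase the capacity) if and only if there exist $i_1,i_2\in\{1,\dots,m\}$ such that every $K^{(s)}$ with $p_S(s)>0$ is $(i_1,i_2)$-ended.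
   Context: A channel from a finite set $A$ to a finite set $B$ is a row-stochastic matrix; $W_{x,*}$ denotes row $x$. For a probability distribution $\mu$ on the input set, $I(\mu,W)=\sum_x\mu_x D(W_{x,*}\|\mu W)$ (Kullback–Leibler divergence) and $C(W)=\max_\mu I(\mu,W)$. A channel $K$ from $\{1,\dots,m\}$ to $\{1,2\}$ is called $(i_1,i_2)$-ended if $K_{i_1,1}=\min_i K_{i,1}$ and $K_{i_2,1}=\max_i K_{i,1}$ (equivalently, all rows of $K$ lie on the segment from $K_{i_1,*}$ to $K_{i_2,*}$). *)

theory Defs
  imports "HOL-Analysis.Analysis"
begin

text \<open>A channel from a finite set A to a finite set B is a row-stochastic matrix,
  represented as a function W :: 'a => 'b => real (only values on A x B matter).\<close>
definition channel :: "'a set \<Rightarrow> 'b set \<Rightarrow> ('a \<Rightarrow> 'b \<Rightarrow> real) \<Rightarrow> bool" where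
  "channel A B W \<longleftrightarrow> finite A \<and> finite B \<and> (\<forall>x\<in>A. \<forall>y\<in>B. 0 \<le> W x y) \<and> (\<forall>x\<in>A. (\<Sum>y\<in>B. W x y) = 1)"

definition pdist :: "'a set \<Rightarrow> ('a \<Rightarrow> real) \<Rightarrow> bool" where
  "pdist A \<mu> \<longleftrightarrow> finite A \<and> (\<forall>x\<in>A. 0 \<le> \<mu> x) \<and> sum \<mu> A = 1"

definition out_dist :: "'a set \<Rightarrow> ('a \<Rightarrow> real) \<Rightarrow> ('a \<Rightarrow> 'b \<Rightarrow> real) \<Rightarrow> 'b \<Rightarrow> real" where
  "out_dist A \<mu> W y = (\<Sum>x\<in>A. \<mu> x * W x y)"

text \<open>Kullback-Leibler divergence D(P||Q) (natural logarithm), sum over the support of P.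
  (Only used where P is absolutely continuous w.r.t. Q.)\<close>
definition KL :: "'b set \<Rightarrow> ('b \<Rightarrow> real) \<Rightarrow> ('b \<Rightarrow> real) \<Rightarrow> real" where
  "KL B P Q = (\<Sum>y\<in>B. if P y > 0 then P y * ln (P y / Q y) else 0)"

definition mutual_info :: "'a set \<Rightarrow> 'b set \<Rightarrow> ('a \<Rightarrow> real) \<Rightarrow> ('a \<Rightarrow> 'b \<Rightarrow> real) \<Rightarrow> real" where
  "mutual_info A B \<mu> W = (\<Sum>x\<in>A. \<mu> x * KL B (W x) (out_dist A \<mu> W))"

definition capacity :: "'a set \<Rightarrow> 'b set \<Rightarrow> ('a \<Rightarrow> 'b \<Rightarrow> real) \<Rightarrow> real" where
  "capacity A B W = (SUP \<mu>\<in>{\<mu>. pdist A \<mu>}. mutual_info A B \<mu> W)"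

definition chan_comp :: "'b set \<Rightarrow> ('a \<Rightarrow> 'b \<Rightarrow> real) \<Rightarrow> ('b \<Rightarrow> 'c \<Rightarrow> real) \<Rightarrow> 'a \<Rightarrow> 'c \<Rightarrow> real" where
  "chan_comp B W1 W2 x z = (\<Sum>y\<in>B. W1 x y * W2 y z)"

definition ended :: "nat \<Rightarrow> (nat \<Rightarrow> nat \<Rightarrow> real) \<Rightarrow> nat \<Rightarrow> nat \<Rightarrow> bool" where
  "ended m K i1 i2 \<longleftrightarrow> K i1 1 = (MIN i\<in>{1..m}. K i 1) \<and> K i2 1 = (MAX i\<in>{1..m}. K i 1)"

end

theory Submission imports Defs "HOL-Real_Asymp.Real_Asymp"
begin

definition phi :: "real \<Rightarrow> real" where "phi x = x * ln x"

lemma phi_tangent: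
  fixes z w :: real assumes "0 < z" "0 \<le> w"
  shows "z * ln z + (1 + ln z) * (w - z) \<le> phi w"
    and "w \<noteq> z \<Longrightarrow> z * ln z + (1 + ln z) * (w - z) < phi w"
proof -
  { assume "w = 0" hence "z * ln z + (1 + ln z) * (w - z) = - z" by (simp add: algebra_simps)
    hence "z * ln z + (1 + ln z) * (w - z) < phi w" using \<open>w=0\<close> assms by (simp add: phi_def) }
  moreover
  { assume "w > 0"
    have "ln z - ln w \<le> (z - w) / w" using ln_diff_le[of z w] assms \<open>w>0\<close> by simp
    hence "w * (ln z - ln w) \<le> z - w" using \<open>w>0\<close> by (simp add: field_simps)
    hence "z * ln z + (1 + ln z) * (w - z) \<le> phi w" by (simp add: phi_def algebra_simps)
    moreover have "w \<noteq> z \<Longrightarrow> z * ln z + (1 + ln z) * (w - z) < phi w"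
    proof -
      assume "w \<noteq> z"
      have "ln z - ln w < (z - w) / w" using ln_diff_less[of z w] assms \<open>w>0\<close> \<open>w\<noteq>z\<close> by simp
      hence "w * (ln z - ln w) < z - w" using \<open>w>0\<close> by (simp add: field_simps)
      thus ?thesis by (simp add: phi_def algebra_simps)
    qed
    ultimately have "z * ln z + (1 + ln z) * (w - z) \<le> phi w"
       "w \<noteq> z \<Longrightarrow> z * ln z + (1 + ln z) * (w - z) < phi w" by auto }
  ultimately show "z * ln z + (1 + ln z) * (w - z) \<le> phi w"
    and "w \<noteq> z \<Longrightarrow> z * ln z + (1 + ln z) * (w - z) < phi w" using assms by force+
qed

lemma phi_convex:
  fixes x y l :: real assumes "0 \<le> x" "0 \<le> y" "0 \<le> l" "l \<le> 1"
  shows "phi (l * x + (1 - l) * y) \<le> l * phi x + (1 - l) * phi y"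
proof (cases "l * x + (1 - l) * y = 0")
  case True
  hence "l * x = 0" "(1-l) * y = 0" using assms by (smt (verit) mult_nonneg_nonneg)+
  hence "l * phi x = 0" "(1-l) * phi y = 0" by (auto simp: phi_def)
  moreover have "phi (l * x + (1 - l) * y) = 0" using True by (simp add: phi_def)
  ultimately show ?thesis by linarith
next
  case False
  define z where "z = l * x + (1 - l) * y"
  have zp: "z > 0" using False assms unfolding z_def by (smt (verit) mult_nonneg_nonneg)
  have "l * (z * ln z + (1 + ln z) * (x - z)) + (1-l) * (z * ln z + (1 + ln z) * (y - z)) = phi z"
    unfolding z_def phi_def by (simp add: algebra_simps)
  moreover have "l * (z * ln z + (1 + ln z) * (x - z)) \<le> l * phi x"
    using phi_tangent(1)[OF zp assms(1)] assms by (simp add: mult_left_mono)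
  moreover have "(1-l) * (z * ln z + (1 + ln z) * (y - z)) \<le> (1-l) * phi y"
    using phi_tangent(1)[OF zp assms(2)] assms by (simp add: mult_left_mono)
  ultimately show ?thesis unfolding z_def by linarith
qed

lemma phi_strict:
  fixes x y l :: real assumes "0 \<le> x" "0 \<le> y" "0 < l" "l < 1" "x \<noteq> y"
  shows "phi (l * x + (1 - l) * y) < l * phi x + (1 - l) * phi y"
proof -
  define z where "z = l * x + (1 - l) * y"
  have zp: "z > 0" using assms unfolding z_def
    by (smt (verit) mult_nonneg_nonneg mult_pos_pos)
  have "x \<noteq> z \<or> y \<noteq> z" using assms unfolding z_def by (auto simp: algebra_simps)
  have e: "l * (z * ln z + (1 + ln z) * (x - z)) + (1-l) * (z * ln z + (1 + ln z) * (y - z)) = phi z"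
    unfolding z_def phi_def by (simp add: algebra_simps)
  have a: "l * (z * ln z + (1 + ln z) * (x - z)) \<le> l * phi x"
    using phi_tangent(1)[OF zp assms(1)] assms by (simp add: mult_left_mono)
  have b: "(1-l) * (z * ln z + (1 + ln z) * (y - z)) \<le> (1-l) * phi y"
    using phi_tangent(1)[OF zp assms(2)] assms by (simp add: mult_left_mono)
  show ?thesis
  proof (cases "x \<noteq> z")
    case True
    have "l * (z * ln z + (1 + ln z) * (x - z)) < l * phi x"
      using phi_tangent(2)[OF zp assms(1) True] assms by simp
    thus ?thesis using e b unfolding z_def by linarith
  next
    case False
    hence "y \<noteq> z" using \<open>x \<noteq> z \<or> y \<noteq> z\<close> by auto
    have "(1-l) * (z * ln z + (1 + ln z) * (y - z)) < (1-l) * phi y"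
      using phi_tangent(2)[OF zp assms(2) \<open>y\<noteq>z\<close>] assms by simp
    thus ?thesis using e a unfolding z_def by linarith
  qed
qed

lemma phi_cont: "continuous_on {0..} phi"
proof -
  have "continuous (at x within {0..}) phi" if "x \<ge> 0" for x
  proof (cases "x = 0")
    case True
    have "(phi \<longlongrightarrow> 0) (at_right 0)" unfolding phi_def by real_asymp
    thus ?thesis using True by (simp add: continuous_within at_within_Ici_at_right phi_def)
  next
    case False
    hence "x > 0" using that by simp
    hence "isCont phi x" unfolding phi_def by (intro continuous_intros) auto
    thus ?thesis using continuous_at_imp_continuous_within by blast
  qed
  thus ?thesis using continuous_on_eq_continuous_within by blast
qed

definition Pt :: "(nat \<Rightarrow> real) \<Rightarrow> (nat \<Rightarrow> real) \<Rightarrow> real \<Rightarrow> nat \<Rightarrow> real" where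
  "Pt a b t z = t * a z + (1 - t) * b z"

definition Phi :: "nat set \<Rightarrow> (nat \<Rightarrow> real) \<Rightarrow> (nat \<Rightarrow> real) \<Rightarrow> real \<Rightarrow> real" where
  "Phi B a b t = (\<Sum>z\<in>B. phi (Pt a b t z))"

lemma Pt_comb: "Pt a b (l * x + (1 - l) * y) z = l * Pt a b x z + (1 - l) * Pt a b y z"
  unfolding Pt_def by (simp add: algebra_simps)

lemma Pt_nonneg: assumes "\<forall>z\<in>B. 0 \<le> a z \<and> 0 \<le> b z" "z \<in> B" "0 \<le> t" "t \<le> 1"
  shows "0 \<le> Pt a b t z"
  using assms unfolding Pt_def by (simp add: add_nonneg_nonneg mult_nonneg_nonneg)

lemma Phi_convex:
  assumes "\<forall>z\<in>B. 0 \<le> a z \<and> 0 \<le> b z" "x \<in> {0..1}" "y \<in> {0..1}" "0 \<le> l" "l \<le> 1"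
  shows "Phi B a b (l * x + (1 - l) * y) \<le> l * Phi B a b x + (1 - l) * Phi B a b y"
proof -
  have "Phi B a b (l * x + (1 - l) * y) \<le> (\<Sum>z\<in>B. l * phi (Pt a b x z) + (1 - l) * phi (Pt a b y z))"
    unfolding Phi_def Pt_comb
    by (rule sum_mono, rule phi_convex) (use assms Pt_nonneg[OF assms(1)] in auto)
  thus ?thesis by (simp add: Phi_def sum.distrib sum_distrib_left)
qed

lemma Phi_strict:
  assumes "finite B" "\<forall>z\<in>B. 0 \<le> a z \<and> 0 \<le> b z" "\<exists>z\<in>B. a z \<noteq> b z"
    "x \<in> {0..1}" "y \<in> {0..1}" "0 < l" "l < 1" "x \<noteq> y"
  shows "Phi B a b (l * x + (1 - l) * y) < l * Phi B a b x + (1 - l) * Phi B a b y"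
proof -
  obtain z0 where z0: "z0 \<in> B" "a z0 \<noteq> b z0" using assms by auto
  have "Phi B a b (l * x + (1 - l) * y) < (\<Sum>z\<in>B. l * phi (Pt a b x z) + (1 - l) * phi (Pt a b y z))"
    unfolding Phi_def Pt_comb
  proof (rule sum_strict_mono_ex1[OF assms(1)])
    show "\<forall>z\<in>B. phi (l * Pt a b x z + (1 - l) * Pt a b y z) \<le> l * phi (Pt a b x z) + (1 - l) * phi (Pt a b y z)"
      by (intro ballI phi_convex) (use assms Pt_nonneg[OF assms(2)] in auto)
    have "Pt a b x z0 \<noteq> Pt a b y z0"
    proof
      assume "Pt a b x z0 = Pt a b y z0"
      hence "(x - y) * (a z0 - b z0) = 0" unfolding Pt_def by (simp add: algebra_simps)
      thus False using z0 assms by simp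
    qed
    thus "\<exists>z\<in>B. phi (l * Pt a b x z + (1 - l) * Pt a b y z) < l * phi (Pt a b x z) + (1 - l) * phi (Pt a b y z)"
      using z0 by (intro bexI[of _ z0] phi_strict) (use assms Pt_nonneg[OF assms(2)] in auto)
  qed
  thus ?thesis by (simp add: Phi_def sum.distrib sum_distrib_left)
qed

lemma Phi_cont:
  assumes "\<forall>z\<in>B. 0 \<le> a z \<and> 0 \<le> b z"
  shows "continuous_on {0..1} (Phi B a b)"
  unfolding Phi_def
proof (intro continuous_on_sum)
  fix z assume "z \<in> B"
  have "continuous_on {0..1} (\<lambda>t. Pt a b t z)" unfolding Pt_def by (intro continuous_intros)
  moreover have "(\<lambda>t. Pt a b t z) ` {0..1} \<subseteq> {0..}" using Pt_nonneg[OF assms \<open>z\<in>B\<close>] by auto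
  ultimately show "continuous_on {0..1} (\<lambda>t. phi (Pt a b t z))"
    using continuous_on_compose2[OF phi_cont] by blast
qed

lemma mi_entropy:
  assumes "finite A" "finite B" "pdist A \<mu>" "\<forall>x\<in>A. \<forall>y\<in>B. 0 \<le> W x y"
  shows "mutual_info A B \<mu> W = (\<Sum>x\<in>A. \<mu> x * (\<Sum>y\<in>B. phi (W x y))) - (\<Sum>y\<in>B. phi (out_dist A \<mu> W y))"
proof -
  let ?Q = "out_dist A \<mu> W"
  have mu0: "\<forall>x\<in>A. 0 \<le> \<mu> x" using assms(3) unfolding pdist_def by auto
  have tm: "\<mu> x * (if W x y > 0 then W x y * ln (W x y / ?Q y) else 0) = \<mu> x * phi (W x y) - \<mu> x * W x y * ln (?Q y)"
    if "x \<in> A" "y \<in> B" for x y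
  proof (cases "\<mu> x = 0 \<or> W x y = 0")
    case True thus ?thesis by (auto simp: phi_def)
  next
    case False
    hence pos: "\<mu> x > 0" "W x y > 0" using mu0 assms(4) that by force+
    have "\<mu> x * W x y \<le> ?Q y" unfolding out_dist_def
      using member_le_sum[where f="\<lambda>x. \<mu> x * W x y", OF that(1)] mu0 assms(1,4) that
      by (simp add: mult_nonneg_nonneg)
    hence "?Q y > 0" using pos by (smt (verit) mult_pos_pos)
    thus ?thesis using pos by (simp add: phi_def ln_div algebra_simps)
  qed
  have "mutual_info A B \<mu> W = (\<Sum>x\<in>A. \<Sum>y\<in>B. \<mu> x * phi (W x y) - \<mu> x * W x y * ln (?Q y))"
    unfolding mutual_info_def KL_def sum_distrib_left using tm by (intro sum.cong) auto
  also have "\<dots> = (\<Sum>x\<in>A. \<mu> x * (\<Sum>y\<in>B. phi (W x y))) - (\<Sum>y\<in>B. \<Sum>x\<in>A. \<mu> x * W x y * ln (?Q y))"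
    by (simp add: sum_subtractf sum_distrib_left sum.swap[of _ B A])
  also have "(\<Sum>y\<in>B. \<Sum>x\<in>A. \<mu> x * W x y * ln (?Q y)) = (\<Sum>y\<in>B. phi (?Q y))"
    unfolding phi_def out_dist_def by (simp add: sum_distrib_right)
  finally show ?thesis .
qed

lemma capacity_cong:
  assumes "\<forall>x\<in>A. \<forall>y\<in>B. W x y = W' x y"
  shows "capacity A B W = capacity A B W'"
proof -
  have "mutual_info A B \<mu> W = mutual_info A B \<mu> W'" for \<mu>
  proof -
    have "out_dist A \<mu> W y = out_dist A \<mu> W' y" if "y \<in> B" for y
      unfolding out_dist_def using assms that by (intro sum.cong) auto
    thus ?thesis unfolding mutual_info_def KL_def using assms
      by (intro sum.cong refl arg_cong2[where f="(*)"]) auto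
  qed
  thus ?thesis unfolding capacity_def by simp
qed

lemma comb_in:
  fixes lo hi v :: real
  assumes "lo \<le> hi" "0 \<le> v" "v \<le> 1"
  shows "lo \<le> v * lo + (1 - v) * hi" "v * lo + (1 - v) * hi \<le> hi"
proof -
  have e1: "v * lo + (1 - v) * hi - lo = (1 - v) * (hi - lo)" by (simp add: algebra_simps)
  have e2: "(1 - v) * (hi - lo) \<ge> 0" using assms by simp
  have e3: "hi - (v * lo + (1 - v) * hi) = v * (hi - lo)" by (simp add: algebra_simps)
  have e4: "v * (hi - lo) \<ge> 0" using assms by simp
  show "lo \<le> v * lo + (1 - v) * hi" using e1 e2 by linarith
  show "v * lo + (1 - v) * hi \<le> hi" using e3 e4 by linarith
qed

lemma comb_in01:
  fixes lo hi v :: real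
  assumes "lo \<in> {0..1}" "hi \<in> {0..1}" "v \<in> {0..1}"
  shows "v * lo + (1 - v) * hi \<in> {0..1}"
proof (cases "lo \<le> hi")
  case True thus ?thesis using comb_in[OF True] assms by force
next
  case False
  hence "hi \<le> lo" by simp
  from comb_in[OF this, of "1 - v"] assms show ?thesis by (auto simp: algebra_simps)
qed

definition fgap :: "(real \<Rightarrow> real) \<Rightarrow> real \<Rightarrow> real \<Rightarrow> real \<Rightarrow> real" where
  "fgap F lo hi v = v * F lo + (1 - v) * F hi - F (v * lo + (1 - v) * hi)"

definition Gs :: "(real \<Rightarrow> real) \<Rightarrow> real \<Rightarrow> real \<Rightarrow> real" where
  "Gs F lo hi = (SUP v\<in>{0..1}. fgap F lo hi v)"

locale gapfun =
  fixes F :: "real \<Rightarrow> real"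
  assumes cvx: "\<And>x y l. x \<in> {0..1} \<Longrightarrow> y \<in> {0..1} \<Longrightarrow> 0 \<le> l \<Longrightarrow> l \<le> 1 \<Longrightarrow>
      F (l * x + (1 - l) * y) \<le> l * F x + (1 - l) * F y"
    and str: "\<And>x y l. x \<in> {0..1} \<Longrightarrow> y \<in> {0..1} \<Longrightarrow> 0 < l \<Longrightarrow> l < 1 \<Longrightarrow> x \<noteq> y \<Longrightarrow>
      F (l * x + (1 - l) * y) < l * F x + (1 - l) * F y"
    and cont: "continuous_on {0..1} F"
begin

lemma gap_max:
  assumes "lo \<in> {0..1}" "hi \<in> {0..1}"
  shows "\<exists>v\<in>{0..1}. (\<forall>w\<in>{0..1}. fgap F lo hi w \<le> fgap F lo hi v) \<and> Gs F lo hi = fgap F lo hi v"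
proof -
  have c1: "continuous_on {0..1} (\<lambda>v. v * lo + (1 - v) * hi)" by (intro continuous_intros)
  have "(\<lambda>v. v * lo + (1 - v) * hi) ` {0..1} \<subseteq> {0..1}" using comb_in01[OF assms] by auto
  hence "continuous_on {0..1} (\<lambda>v. F (v * lo + (1 - v) * hi))"
    using continuous_on_compose2[OF cont c1] by blast
  hence "continuous_on {0..1} (fgap F lo hi)" unfolding fgap_def by (intro continuous_intros)
  then obtain v where v: "v \<in> {0..1}" "\<forall>w\<in>{0..1}. fgap F lo hi w \<le> fgap F lo hi v"
    using continuous_attains_sup[of "{0..1::real}" "fgap F lo hi"] by auto
  have "Gs F lo hi = fgap F lo hi v" unfolding Gs_def
    by (rule cSup_eq_maximum) (use v in auto)
  thus ?thesis using v by blast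
qed

lemma gap_upper:
  assumes "lo \<in> {0..1}" "hi \<in> {0..1}" "v \<in> {0..1}"
  shows "fgap F lo hi v \<le> Gs F lo hi"
  using gap_max[OF assms(1,2)] assms(3) by auto

lemma gap_strict:
  assumes "lo' \<le> lo" "lo \<le> hi" "hi \<le> hi'" "lo' \<ge> 0" "hi' \<le> 1" "(lo, hi) \<noteq> (lo', hi')"
  shows "Gs F lo hi < Gs F lo' hi'"
proof -
  have r: "lo \<in> {0..1}" "hi \<in> {0..1}" "lo' \<in> {0..1}" "hi' \<in> {0..1}" using assms by auto
  obtain v where v: "v \<in> {0..1}" "Gs F lo hi = fgap F lo hi v" using gap_max[OF r(1,2)] by blast
  have lh: "lo' < hi'" using assms by auto
  show ?thesis
  proof (cases "fgap F lo hi v \<le> 0")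
    case True
    have "F ((1/2) * lo' + (1 - 1/2) * hi') < (1/2) * F lo' + (1 - 1/2) * F hi'"
      by (rule str) (use r lh in auto)
    hence "0 < fgap F lo' hi' (1/2)" unfolding fgap_def by simp
    also have "\<dots> \<le> Gs F lo' hi'" by (rule gap_upper) (use r in auto)
    finally show ?thesis using True v by simp
  next
    case False
    have "lo \<noteq> hi"
    proof
      assume "lo = hi" hence "fgap F lo hi v = 0" unfolding fgap_def by (simp add: algebra_simps)
      thus False using False by simp
    qed
    hence lt: "lo < hi" using assms by simp
    have "v \<noteq> 0" "v \<noteq> 1" using False unfolding fgap_def by auto
    hence v01: "0 < v" "v < 1" using v by auto
    define d where "d = hi' - lo'"
    have dp: "d > 0" using lh d_def by simp
    define al where "al = (hi' - lo) / d"
    define be where "be = (hi' - hi) / d"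
    have ald: "al * d = hi' - lo" using dp unfolding al_def by simp
    have bed: "be * d = hi' - hi" using dp unfolding be_def by simp
    have al: "0 \<le> al" "al \<le> 1" "lo = al * lo' + (1 - al) * hi'"
    proof -
      show "0 \<le> al" using dp assms unfolding al_def by simp
      show "al \<le> 1" using dp assms unfolding al_def d_def by (simp add: field_simps)
      have "al * lo' + (1 - al) * hi' = hi' - al * d" unfolding d_def by (simp add: algebra_simps)
      thus "lo = al * lo' + (1 - al) * hi'" using ald by simp
    qed
    have be: "0 \<le> be" "be \<le> 1" "hi = be * lo' + (1 - be) * hi'"
    proof -
      show "0 \<le> be" using dp assms unfolding be_def by simp
      show "be \<le> 1" using dp assms unfolding be_def d_def by (simp add: field_simps)
      have "be * lo' + (1 - be) * hi' = hi' - be * d" unfolding d_def by (simp add: algebra_simps)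
      thus "hi = be * lo' + (1 - be) * hi'" using bed by simp
    qed
    have Flo: "F lo \<le> al * F lo' + (1 - al) * F hi'" using cvx[OF r(3,4) al(1,2)] al(3) by simp
    have Fhi: "F hi \<le> be * F lo' + (1 - be) * F hi'" using cvx[OF r(3,4) be(1,2)] be(3) by simp
    have strict: "F lo < al * F lo' + (1 - al) * F hi' \<or> F hi < be * F lo' + (1 - be) * F hi'"
    proof (cases "lo' < lo")
      case True
      have "0 < al" "al < 1" using dp assms True lt unfolding al_def d_def by (auto simp: field_simps)
      thus ?thesis using str[OF r(3,4), of al] al(3) lh by auto
    next
      case False
      hence "hi < hi'" using assms by auto
      hence "0 < be" "be < 1" using dp assms lt False unfolding be_def d_def by (auto simp: field_simps)
      thus ?thesis using str[OF r(3,4), of be] be(3) lh by auto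
    qed
    define v' where "v' = v * al + (1 - v) * be"
    have v'r: "v' \<in> {0..1}" unfolding v'_def using comb_in01[of al be v] al be v by auto
    have tau: "v' * lo' + (1 - v') * hi' = v * lo + (1 - v) * hi"
      unfolding v'_def by (subst al(3), subst be(3)) (simp add: algebra_simps)
    have "v * F lo + (1 - v) * F hi < v * (al * F lo' + (1 - al) * F hi') + (1 - v) * (be * F lo' + (1 - be) * F hi')"
    proof -
      have a: "v * F lo \<le> v * (al * F lo' + (1 - al) * F hi')" using Flo v01 by simp
      have b: "(1 - v) * F hi \<le> (1 - v) * (be * F lo' + (1 - be) * F hi')" using Fhi v01 by simp
      show ?thesis
      proof (cases "F lo < al * F lo' + (1 - al) * F hi'")
        case True
        hence "v * F lo < v * (al * F lo' + (1 - al) * F hi')" using v01 by simp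
        thus ?thesis using b by linarith
      next
        case False
        hence "F hi < be * F lo' + (1 - be) * F hi'" using strict by simp
        hence "(1 - v) * F hi < (1 - v) * (be * F lo' + (1 - be) * F hi')" using v01 by simp
        thus ?thesis using a by linarith
      qed
    qed
    also have "\<dots> = v' * F lo' + (1 - v') * F hi'" unfolding v'_def by (simp add: algebra_simps)
    finally have "fgap F lo hi v < fgap F lo' hi' v'" unfolding fgap_def using tau by simp
    also have "\<dots> \<le> Gs F lo' hi'" by (rule gap_upper) (use r v'r in auto)
    finally show ?thesis using v by simp
  qed
qed

end


lemma mi_formula:
  assumes "finite A" "finite B" "\<forall>z\<in>B. 0 \<le> a z \<and> 0 \<le> b z" "\<forall>x\<in>A. t x \<in> {0..1}" "pdist A \<mu>"
  shows "mutual_info A B \<mu> (\<lambda>x. Pt a b (t x)) = (\<Sum>x\<in>A. \<mu> x * Phi B a b (t x)) - Phi B a b (\<Sum>x\<in>A. \<mu> x * t x)"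
proof -
  have s1: "sum \<mu> A = 1" using assms(5) unfolding pdist_def by auto
  have od: "out_dist A \<mu> (\<lambda>x. Pt a b (t x)) z = Pt a b (\<Sum>x\<in>A. \<mu> x * t x) z" for z
  proof -
    have "out_dist A \<mu> (\<lambda>x. Pt a b (t x)) z = (\<Sum>x\<in>A. \<mu> x * t x * a z + \<mu> x * b z - \<mu> x * t x * b z)"
      unfolding out_dist_def Pt_def by (intro sum.cong) (auto simp: algebra_simps)
    also have "\<dots> = (\<Sum>x\<in>A. \<mu> x * t x) * a z + sum \<mu> A * b z - (\<Sum>x\<in>A. \<mu> x * t x) * b z"
      by (simp add: sum.distrib sum_subtractf sum_distrib_right)
    finally show ?thesis using s1 unfolding Pt_def by (simp add: algebra_simps)
  qed
  have "mutual_info A B \<mu> (\<lambda>x. Pt a b (t x)) = (\<Sum>x\<in>A. \<mu> x * (\<Sum>y\<in>B. phi (Pt a b (t x) y))) - (\<Sum>y\<in>B. phi (out_dist A \<mu> (\<lambda>x. Pt a b (t x)) y))"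
    by (rule mi_entropy) (use assms Pt_nonneg in auto)
  thus ?thesis unfolding od Phi_def by simp
qed

lemma mix2:
  fixes v :: real and g :: "'a \<Rightarrow> real"
  assumes "finite A" "xl \<in> A" "xh \<in> A"
  shows "(\<Sum>x\<in>A. ((if x = xl then v else 0) + (if x = xh then 1 - v else 0)) * g x) = v * g xl + (1 - v) * g xh"
proof -
  have "(\<Sum>x\<in>A. ((if x = xl then v else 0) + (if x = xh then 1 - v else 0)) * g x)
     = (\<Sum>x\<in>A. (if x = xl then v * g x else 0)) + (\<Sum>x\<in>A. (if x = xh then (1 - v) * g x else 0))"
    by (subst sum.distrib[symmetric]) (rule sum.cong; auto simp: algebra_simps)
  thus ?thesis using assms by (simp add: sum.delta)
qed

lemma cap_reduce:
  assumes "finite A" "A \<noteq> {}" "finite B" "\<forall>z\<in>B. 0 \<le> a z \<and> 0 \<le> b z" "\<exists>z\<in>B. a z \<noteq> b z"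
    "\<forall>x\<in>A. t x \<in> {0..1}"
  shows "capacity A B (\<lambda>x. Pt a b (t x)) = Gs (Phi B a b) (Min (t ` A)) (Max (t ` A))"
proof -
  interpret gapfun "Phi B a b"
  proof
    show "\<And>x y l. x \<in> {0..1} \<Longrightarrow> y \<in> {0..1} \<Longrightarrow> 0 \<le> l \<Longrightarrow> l \<le> 1 \<Longrightarrow>
      Phi B a b (l * x + (1 - l) * y) \<le> l * Phi B a b x + (1 - l) * Phi B a b y"
      using Phi_convex[OF assms(4)] by blast
    show "\<And>x y l. x \<in> {0..1} \<Longrightarrow> y \<in> {0..1} \<Longrightarrow> 0 < l \<Longrightarrow> l < 1 \<Longrightarrow> x \<noteq> y \<Longrightarrow>
      Phi B a b (l * x + (1 - l) * y) < l * Phi B a b x + (1 - l) * Phi B a b y"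
      using Phi_strict[OF assms(3,4,5)] by blast
    show "continuous_on {0..1} (Phi B a b)" using Phi_cont[OF assms(4)] .
  qed
  let ?F = "Phi B a b"
  let ?W = "\<lambda>x. Pt a b (t x)"
  define lo where "lo = Min (t ` A)"
  define hi where "hi = Max (t ` A)"
  have fin: "finite (t ` A)" "t ` A \<noteq> {}" using assms by auto
  obtain xl where xl: "xl \<in> A" "t xl = lo" using Min_in[OF fin] unfolding lo_def by auto
  obtain xh where xh: "xh \<in> A" "t xh = hi" using Max_in[OF fin] unfolding hi_def by auto
  have bnd: "lo \<le> t x" "t x \<le> hi" if "x \<in> A" for x
    using that fin unfolding lo_def hi_def by auto
  have lohi: "lo \<in> {0..1}" "hi \<in> {0..1}" using xl xh assms(6) by auto
  have lh: "lo \<le> hi" using bnd xl by force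
  have up: "mutual_info A B \<mu> ?W \<le> Gs ?F lo hi" if mu: "pdist A \<mu>" for \<mu>
  proof -
    have mu0: "\<forall>x\<in>A. 0 \<le> \<mu> x" "sum \<mu> A = 1" using mu unfolding pdist_def by auto
    define al where "al x = (if lo = hi then 1 else (hi - t x) / (hi - lo))" for x
    have al: "0 \<le> al x" "al x \<le> 1" "t x = al x * lo + (1 - al x) * hi" if "x \<in> A" for x
    proof -
      show "0 \<le> al x" "al x \<le> 1" using bnd[OF that] lh unfolding al_def by (auto simp: field_simps)
      show "t x = al x * lo + (1 - al x) * hi"
      proof (cases "lo = hi")
        case True thus ?thesis using bnd[OF that] unfolding al_def by simp
      next
        case False
        hence "al x * (hi - lo) = hi - t x" unfolding al_def by simp
        thus ?thesis by (simp add: algebra_simps)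
      qed
    qed
    define v where "v = (\<Sum>x\<in>A. \<mu> x * al x)"
    have v0: "0 \<le> v" unfolding v_def using mu0 al by (intro sum_nonneg) auto
    have v1: "v \<le> 1"
    proof -
      have "v \<le> (\<Sum>x\<in>A. \<mu> x)" unfolding v_def using mu0 al
        by (intro sum_mono) (simp add: mult_left_le)
      thus ?thesis using mu0 by simp
    qed
    have tau: "(\<Sum>x\<in>A. \<mu> x * t x) = v * lo + (1 - v) * hi"
    proof -
      have "(\<Sum>x\<in>A. \<mu> x * t x) = (\<Sum>x\<in>A. \<mu> x * al x * lo + \<mu> x * hi - \<mu> x * al x * hi)"
      proof (rule sum.cong[OF refl])
        fix x assume x: "x \<in> A"
        show "\<mu> x * t x = \<mu> x * al x * lo + \<mu> x * hi - \<mu> x * al x * hi"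
          by (subst al(3)[OF x]) (simp add: algebra_simps)
      qed
      also have "\<dots> = v * lo + sum \<mu> A * hi - v * hi"
        unfolding v_def by (simp add: sum.distrib sum_subtractf sum_distrib_right)
      finally show ?thesis using mu0 by (simp add: algebra_simps)
    qed
    have "(\<Sum>x\<in>A. \<mu> x * ?F (t x)) \<le> (\<Sum>x\<in>A. \<mu> x * (al x * ?F lo + (1 - al x) * ?F hi))"
    proof (intro sum_mono mult_left_mono)
      fix x assume x: "x \<in> A"
      show "0 \<le> \<mu> x" using mu0 x by auto
      show "?F (t x) \<le> al x * ?F lo + (1 - al x) * ?F hi"
        using cvx[OF lohi al(1,2)[OF x]] al(3)[OF x] by simp
    qed
    also have "\<dots> = (\<Sum>x\<in>A. \<mu> x * al x * ?F lo + \<mu> x * ?F hi - \<mu> x * al x * ?F hi)"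
      by (intro sum.cong) (auto simp: algebra_simps)
    also have "\<dots> = v * ?F lo + sum \<mu> A * ?F hi - v * ?F hi"
      unfolding v_def by (simp add: sum.distrib sum_subtractf sum_distrib_right)
    also have "\<dots> = v * ?F lo + (1 - v) * ?F hi" using mu0 by (simp add: algebra_simps)
    finally have "mutual_info A B \<mu> ?W \<le> fgap ?F lo hi v"
      unfolding mi_formula[OF assms(1,3,4,6) mu] fgap_def tau by simp
    also have "\<dots> \<le> Gs ?F lo hi" by (rule gap_upper) (use lohi v0 v1 in auto)
    finally show ?thesis .
  qed
  define mu where "mu v x = (if x = xl then v else 0) + (if x = xh then 1 - v else 0)" for v :: real and x
  have mupd: "pdist A (mu v)" if "v \<in> {0..1}" for v
  proof -
    have "sum (mu v) A = v * 1 + (1 - v) * 1"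
      using mix2[OF assms(1) xl(1) xh(1), of v "\<lambda>_. 1"] unfolding mu_def by simp
    moreover have "\<forall>x\<in>A. 0 \<le> mu v x" using that unfolding mu_def by auto
    ultimately show ?thesis unfolding pdist_def using assms(1) by simp
  qed
  have mumi: "mutual_info A B (mu v) ?W = fgap ?F lo hi v" if "v \<in> {0..1}" for v
    unfolding mi_formula[OF assms(1,3,4,6) mupd[OF that]] fgap_def
    using mix2[OF assms(1) xl(1) xh(1), of v "\<lambda>x. ?F (t x)"] mix2[OF assms(1) xl(1) xh(1), of v t]
    unfolding mu_def xl(2) xh(2) by simp
  obtain v where v: "v \<in> {0..1}" "Gs ?F lo hi = fgap ?F lo hi v" using gap_max[OF lohi] by blast
  have ne: "{\<mu>. pdist A \<mu>} \<noteq> {}" using mupd[of 1] by auto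
  have "capacity A B ?W \<le> Gs ?F lo hi" unfolding capacity_def
    by (rule cSUP_least[OF ne]) (use up in auto)
  moreover have "Gs ?F lo hi \<le> capacity A B ?W"
  proof -
    have "bdd_above ((\<lambda>\<mu>. mutual_info A B \<mu> ?W) ` {\<mu>. pdist A \<mu>})"
      using up by (intro bdd_aboveI[of _ "Gs ?F lo hi"]) auto
    hence "mutual_info A B (mu v) ?W \<le> capacity A B ?W" unfolding capacity_def
      by (rule cSUP_upper[rotated]) (use mupd[OF v(1)] in auto)
    thus ?thesis using v mumi[OF v(1)] by simp
  qed
  ultimately show ?thesis unfolding lo_def hi_def by simp
qed


lemma lo_char:
  fixes f :: "'s \<Rightarrow> nat \<Rightarrow> real" and I :: "nat set"
  assumes "finite I" "I \<noteq> {}" "finite S" "\<forall>s\<in>S. 0 \<le> p s"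
  shows "Min ((\<lambda>u. \<Sum>s\<in>S. p s * f s (u s)) ` (S \<rightarrow>\<^sub>E I)) = Min ((\<lambda>i. \<Sum>s\<in>S. p s * f s i) ` I)
     \<longleftrightarrow> (\<exists>i\<in>I. \<forall>s\<in>S. p s > 0 \<longrightarrow> f s i = Min (f s ` I))"
proof -
  define ms where "ms s = Min (f s ` I)" for s
  define c where "c = (\<Sum>s\<in>S. p s * ms s)"
  have msle: "ms s \<le> f s i" if "i \<in> I" for s i using assms(1) that unfolding ms_def by simp
  have msin: "\<exists>i\<in>I. f s i = ms s" for s
  proof -
    have "Min (f s ` I) \<in> f s ` I" using assms(1,2) by (intro Min_in) auto
    then obtain i where "i \<in> I" "Min (f s ` I) = f s i" by blast
    thus ?thesis unfolding ms_def by metis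
  qed
  have geV: "c \<le> (\<Sum>s\<in>S. p s * f s (u s))" if "u \<in> S \<rightarrow>\<^sub>E I" for u
    unfolding c_def using that assms(4) msle by (intro sum_mono mult_left_mono) auto
  define u0 where "u0 = restrict (\<lambda>s. SOME i. i \<in> I \<and> f s i = ms s) S"
  have u0: "u0 s \<in> I \<and> f s (u0 s) = ms s" if "s \<in> S" for s
    unfolding u0_def using that someI_ex[OF msin[of s, unfolded Bex_def]] by simp
  have u0A: "u0 \<in> S \<rightarrow>\<^sub>E I" using u0 unfolding u0_def by auto
  have "(\<Sum>s\<in>S. p s * f s (u0 s)) = c" unfolding c_def using u0 by (intro sum.cong) auto
  hence loV: "Min ((\<lambda>u. \<Sum>s\<in>S. p s * f s (u s)) ` (S \<rightarrow>\<^sub>E I)) = c"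
    using geV u0A assms(1,3) by (intro Min_eqI) (auto simp: finite_PiE)
  have geW: "c \<le> (\<Sum>s\<in>S. p s * f s i)" if "i \<in> I" for i
    unfolding c_def using that assms(4) msle by (intro sum_mono mult_left_mono) auto
  show ?thesis
  proof
    assume "Min ((\<lambda>u. \<Sum>s\<in>S. p s * f s (u s)) ` (S \<rightarrow>\<^sub>E I)) = Min ((\<lambda>i. \<Sum>s\<in>S. p s * f s i) ` I)"
    hence eq: "Min ((\<lambda>i. \<Sum>s\<in>S. p s * f s i) ` I) = c" using loV by simp
    obtain i1 where i1: "i1 \<in> I" "(\<Sum>s\<in>S. p s * f s i1) = Min ((\<lambda>i. \<Sum>s\<in>S. p s * f s i) ` I)"
    proof -
      have "Min ((\<lambda>i. \<Sum>s\<in>S. p s * f s i) ` I) \<in> (\<lambda>i. \<Sum>s\<in>S. p s * f s i) ` I"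
        using assms(1,2) by (intro Min_in) auto
      then obtain i where ii: "i \<in> I" "Min ((\<lambda>i. \<Sum>s\<in>S. p s * f s i) ` I) = (\<Sum>s\<in>S. p s * f s i)" by blast
      show ?thesis by (rule that[OF ii(1) ii(2)[symmetric]])
    qed
    have "(\<Sum>s\<in>S. p s * (f s i1 - ms s)) = (\<Sum>s\<in>S. p s * f s i1) - c"
      unfolding c_def by (simp only: right_diff_distrib sum_subtractf)
    hence "(\<Sum>s\<in>S. p s * (f s i1 - ms s)) = 0" using i1(2) eq by simp
    moreover have "\<forall>s\<in>S. 0 \<le> p s * (f s i1 - ms s)"
    proof
      fix s assume "s \<in> S"
      thus "0 \<le> p s * (f s i1 - ms s)" using assms(4) msle[OF i1(1), of s] by (intro mult_nonneg_nonneg) auto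
    qed
    ultimately have "\<forall>s\<in>S. p s * (f s i1 - ms s) = 0"
      using sum_nonneg_eq_0_iff[OF assms(3), of "\<lambda>s. p s * (f s i1 - ms s)"] by simp
    hence "\<forall>s\<in>S. p s > 0 \<longrightarrow> f s i1 = ms s" by auto
    thus "\<exists>i\<in>I. \<forall>s\<in>S. p s > 0 \<longrightarrow> f s i = Min (f s ` I)" using i1(1) unfolding ms_def by blast
  next
    assume "\<exists>i\<in>I. \<forall>s\<in>S. p s > 0 \<longrightarrow> f s i = Min (f s ` I)"
    then obtain i1 where i1: "i1 \<in> I" "\<forall>s\<in>S. p s > 0 \<longrightarrow> f s i1 = ms s" unfolding ms_def by blast
    have "(\<Sum>s\<in>S. p s * f s i1) = c" unfolding c_def
    proof (rule sum.cong[OF refl])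
      fix s assume "s \<in> S"
      thus "p s * f s i1 = p s * ms s" using i1 assms(4) by (cases "p s = 0") auto
    qed
    hence "Min ((\<lambda>i. \<Sum>s\<in>S. p s * f s i) ` I) = c"
      using geW i1(1) assms(1) by (intro Min_eqI) auto
    thus "Min ((\<lambda>u. \<Sum>s\<in>S. p s * f s (u s)) ` (S \<rightarrow>\<^sub>E I)) = Min ((\<lambda>i. \<Sum>s\<in>S. p s * f s i) ` I)"
      using loV by simp
  qed
qed

lemma hi_char:
  fixes f :: "'s \<Rightarrow> nat \<Rightarrow> real" and I :: "nat set"
  assumes "finite I" "I \<noteq> {}" "finite S" "\<forall>s\<in>S. 0 \<le> p s"
  shows "Max ((\<lambda>u. \<Sum>s\<in>S. p s * f s (u s)) ` (S \<rightarrow>\<^sub>E I)) = Max ((\<lambda>i. \<Sum>s\<in>S. p s * f s i) ` I)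
     \<longleftrightarrow> (\<exists>i\<in>I. \<forall>s\<in>S. p s > 0 \<longrightarrow> f s i = Max (f s ` I))"
proof -
  define ms where "ms s = Max (f s ` I)" for s
  define c where "c = (\<Sum>s\<in>S. p s * ms s)"
  have msge: "f s i \<le> ms s" if "i \<in> I" for s i using assms(1) that unfolding ms_def by simp
  have msin: "\<exists>i\<in>I. f s i = ms s" for s
  proof -
    have "Max (f s ` I) \<in> f s ` I" using assms(1,2) by (intro Max_in) auto
    then obtain i where "i \<in> I" "Max (f s ` I) = f s i" by blast
    thus ?thesis unfolding ms_def by metis
  qed
  have geV: "(\<Sum>s\<in>S. p s * f s (u s)) \<le> c" if "u \<in> S \<rightarrow>\<^sub>E I" for u
    unfolding c_def using that assms(4) msge by (intro sum_mono mult_left_mono) auto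
  define u0 where "u0 = restrict (\<lambda>s. SOME i. i \<in> I \<and> f s i = ms s) S"
  have u0: "u0 s \<in> I \<and> f s (u0 s) = ms s" if "s \<in> S" for s
    unfolding u0_def using that someI_ex[OF msin[of s, unfolded Bex_def]] by simp
  have u0A: "u0 \<in> S \<rightarrow>\<^sub>E I" using u0 unfolding u0_def by auto
  have "(\<Sum>s\<in>S. p s * f s (u0 s)) = c" unfolding c_def using u0 by (intro sum.cong) auto
  hence loV: "Max ((\<lambda>u. \<Sum>s\<in>S. p s * f s (u s)) ` (S \<rightarrow>\<^sub>E I)) = c"
    using geV u0A assms(1,3) by (intro Max_eqI) (auto simp: finite_PiE)
  have geW: "(\<Sum>s\<in>S. p s * f s i) \<le> c" if "i \<in> I" for i
    unfolding c_def using that assms(4) msge by (intro sum_mono mult_left_mono) auto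
  show ?thesis
  proof
    assume "Max ((\<lambda>u. \<Sum>s\<in>S. p s * f s (u s)) ` (S \<rightarrow>\<^sub>E I)) = Max ((\<lambda>i. \<Sum>s\<in>S. p s * f s i) ` I)"
    hence eq: "Max ((\<lambda>i. \<Sum>s\<in>S. p s * f s i) ` I) = c" using loV by simp
    obtain i1 where i1: "i1 \<in> I" "(\<Sum>s\<in>S. p s * f s i1) = Max ((\<lambda>i. \<Sum>s\<in>S. p s * f s i) ` I)"
    proof -
      have "Max ((\<lambda>i. \<Sum>s\<in>S. p s * f s i) ` I) \<in> (\<lambda>i. \<Sum>s\<in>S. p s * f s i) ` I"
        using assms(1,2) by (intro Max_in) auto
      then obtain i where ii: "i \<in> I" "Max ((\<lambda>i. \<Sum>s\<in>S. p s * f s i) ` I) = (\<Sum>s\<in>S. p s * f s i)" by blast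
      show ?thesis by (rule that[OF ii(1) ii(2)[symmetric]])
    qed
    have "(\<Sum>s\<in>S. p s * (ms s - f s i1)) = c - (\<Sum>s\<in>S. p s * f s i1)"
      unfolding c_def by (simp only: right_diff_distrib sum_subtractf)
    hence "(\<Sum>s\<in>S. p s * (ms s - f s i1)) = 0" using i1(2) eq by simp
    moreover have "\<forall>s\<in>S. 0 \<le> p s * (ms s - f s i1)"
    proof
      fix s assume "s \<in> S"
      thus "0 \<le> p s * (ms s - f s i1)" using assms(4) msge[OF i1(1), of s] by (intro mult_nonneg_nonneg) auto
    qed
    ultimately have "\<forall>s\<in>S. p s * (ms s - f s i1) = 0"
      using sum_nonneg_eq_0_iff[OF assms(3), of "\<lambda>s. p s * (ms s - f s i1)"] by simp
    hence "\<forall>s\<in>S. p s > 0 \<longrightarrow> f s i1 = ms s" by auto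
    thus "\<exists>i\<in>I. \<forall>s\<in>S. p s > 0 \<longrightarrow> f s i = Max (f s ` I)" using i1(1) unfolding ms_def by blast
  next
    assume "\<exists>i\<in>I. \<forall>s\<in>S. p s > 0 \<longrightarrow> f s i = Max (f s ` I)"
    then obtain i1 where i1: "i1 \<in> I" "\<forall>s\<in>S. p s > 0 \<longrightarrow> f s i1 = ms s" unfolding ms_def by blast
    have "(\<Sum>s\<in>S. p s * f s i1) = c" unfolding c_def
    proof (rule sum.cong[OF refl])
      fix s assume "s \<in> S"
      thus "p s * f s i1 = p s * ms s" using i1 assms(4) by (cases "p s = 0") auto
    qed
    hence "Max ((\<lambda>i. \<Sum>s\<in>S. p s * f s i) ` I) = c"
      using geW i1(1) assms(1) by (intro Max_eqI) auto
    thus "Max ((\<lambda>u. \<Sum>s\<in>S. p s * f s (u s)) ` (S \<rightarrow>\<^sub>E I)) = Max ((\<lambda>i. \<Sum>s\<in>S. p s * f s i) ` I)"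
      using loV by simp
  qed
qed




lemma gapfun_Phi:
  assumes "finite B" "\<forall>z\<in>B. 0 \<le> a z \<and> 0 \<le> b z" "\<exists>z\<in>B. a z \<noteq> b z"
  shows "gapfun (Phi B a b)"
proof
  show "\<And>x y l. x \<in> {0..1} \<Longrightarrow> y \<in> {0..1} \<Longrightarrow> 0 \<le> l \<Longrightarrow> l \<le> 1 \<Longrightarrow>
    Phi B a b (l * x + (1 - l) * y) \<le> l * Phi B a b x + (1 - l) * Phi B a b y"
    using Phi_convex[OF assms(2)] by blast
  show "\<And>x y l. x \<in> {0..1} \<Longrightarrow> y \<in> {0..1} \<Longrightarrow> 0 < l \<Longrightarrow> l < 1 \<Longrightarrow> x \<noteq> y \<Longrightarrow>
    Phi B a b (l * x + (1 - l) * y) < l * Phi B a b x + (1 - l) * Phi B a b y"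
    using Phi_strict[OF assms(1,2,3)] by blast
  show "continuous_on {0..1} (Phi B a b)" using Phi_cont[OF assms(2)] .
qed

lemma chan2:
  assumes "channel A {1::nat,2} W" "x \<in> A"
  shows "0 \<le> W x 1" "W x 1 \<le> 1" "W x 2 = 1 - W x 1"
proof -
  have "W x 1 + W x 2 = 1" "0 \<le> W x 1" "0 \<le> W x 2" using assms unfolding channel_def by auto
  thus "0 \<le> W x 1" "W x 1 \<le> 1" "W x 2 = 1 - W x 1" by linarith+
qed

theorem theorem5:
  fixes m n :: nat
    and W1 :: "nat \<Rightarrow> nat \<Rightarrow> real" and W2 :: "nat \<Rightarrow> nat \<Rightarrow> real"
    and S :: "'s set" and p :: "'s \<Rightarrow> real" and K :: "'s \<Rightarrow> nat \<Rightarrow> nat \<Rightarrow> real"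
  assumes "m \<ge> 2" and "n \<ge> 2"
    and "channel {1..m} {1,2} W1"
    and "channel {1,2} {1..n} W2"
    and "\<exists>z\<in>{1..n}. W2 1 z \<noteq> W2 2 z"
    and "finite S" and "pdist S p"
    and "\<forall>s\<in>S. channel {1..m} {1,2} (K s)"
    and "\<forall>x\<in>{1..m}. \<forall>y\<in>{1,2}. W1 x y = (\<Sum>s\<in>S. p s * K s x y)"
  shows "capacity (S \<rightarrow>\<^sub>E {1..m}) {1..n}
            (chan_comp {1,2} (\<lambda>u y. \<Sum>s\<in>S. p s * K s (u s) y) W2)
         = capacity {1..m} {1..n} (chan_comp {1,2} W1 W2)
     \<longleftrightarrow> (\<exists>i1\<in>{1..m}. \<exists>i2\<in>{1..m}. \<forall>s\<in>S. p s > 0 \<longrightarrow> ended m (K s) i1 i2)"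
proof -
  define B where "B = {1..n}"
  define a where "a = W2 1"
  define b where "b = W2 2"
  define AV where "AV = S \<rightarrow>\<^sub>E {1..m}"
  define tW where "tW x = W1 x 1" for x
  define tV where "tV u = (\<Sum>s\<in>S. p s * K s (u s) 1)" for u
  have finB: "finite B" unfolding B_def by simp
  have ab: "\<forall>z\<in>B. 0 \<le> a z \<and> 0 \<le> b z" using assms(4) unfolding channel_def a_def b_def B_def by auto
  have dif: "\<exists>z\<in>B. a z \<noteq> b z" using assms(5) unfolding a_def b_def B_def by auto
  interpret gapfun "Phi B a b" by (rule gapfun_Phi[OF finB ab dif])
  have p0: "\<forall>s\<in>S. 0 \<le> p s" "sum p S = 1" using assms(7) unfolding pdist_def by auto
  have Im: "finite {1..m}" "{1..m} \<noteq> {}" using assms(1) by auto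
  have AVf: "finite AV" "AV \<noteq> {}" unfolding AV_def using Im assms(6) by (auto simp: finite_PiE PiE_eq_empty_iff)
  have tW01: "\<forall>x\<in>{1..m}. tW x \<in> {0..1}" using chan2[OF assms(3)] unfolding tW_def by auto
  have K2: "K s i 2 = 1 - K s i 1" "0 \<le> K s i 1" "K s i 1 \<le> 1" if "s \<in> S" "i \<in> {1..m}" for s i
    using chan2[of "{1..m}" "K s" i] assms(8) that by auto
  have tV01: "\<forall>u\<in>AV. tV u \<in> {0..1}"
  proof
    fix u assume u: "u \<in> AV"
    hence us: "u s \<in> {1..m}" if "s \<in> S" for s using that unfolding AV_def by auto
    have "0 \<le> tV u" unfolding tV_def using p0 K2(2) us by (intro sum_nonneg mult_nonneg_nonneg) auto
    moreover have "tV u \<le> (\<Sum>s\<in>S. p s)" unfolding tV_def using p0 K2(3) us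
      by (intro sum_mono) (simp add: mult_left_le)
    ultimately show "tV u \<in> {0..1}" using p0 by simp
  qed
  have capW: "capacity {1..m} {1..n} (chan_comp {1,2} W1 W2) = capacity {1..m} B (\<lambda>x. Pt a b (tW x))"
    unfolding B_def
  proof (rule capacity_cong, intro ballI)
    fix x z assume "x \<in> {1..m}" "z \<in> {1..n}"
    thus "chan_comp {1, 2} W1 W2 x z = Pt a b (tW x) z"
      using chan2(3)[OF assms(3)] unfolding chan_comp_def Pt_def a_def b_def tW_def by simp
  qed
  have capV: "capacity (S \<rightarrow>\<^sub>E {1..m}) {1..n} (chan_comp {1,2} (\<lambda>u y. \<Sum>s\<in>S. p s * K s (u s) y) W2)
      = capacity AV B (\<lambda>u. Pt a b (tV u))"
    unfolding B_def AV_def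
  proof (rule capacity_cong, intro ballI)
    fix u z assume u: "u \<in> S \<rightarrow>\<^sub>E {1..m}" and "z \<in> {1..n}"
    have "(\<Sum>s\<in>S. p s * K s (u s) 2) = (\<Sum>s\<in>S. p s - p s * K s (u s) 1)"
    proof (rule sum.cong[OF refl])
      fix s assume s: "s \<in> S"
      hence us: "u s \<in> {1..m}" using u by auto
      show "p s * K s (u s) 2 = p s - p s * K s (u s) 1"
        by (subst K2(1)[OF s us]) (simp add: algebra_simps)
    qed
    also have "\<dots> = 1 - tV u" unfolding tV_def using p0 by (simp add: sum_subtractf)
    finally show "chan_comp {1, 2} (\<lambda>u y. \<Sum>s\<in>S. p s * K s (u s) y) W2 u z = Pt a b (tV u) z"
      unfolding chan_comp_def Pt_def a_def b_def tV_def by simp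
  qed
  define loW where "loW = Min (tW ` {1..m})"
  define hiW where "hiW = Max (tW ` {1..m})"
  define loV where "loV = Min (tV ` AV)"
  define hiV where "hiV = Max (tV ` AV)"
  have cW: "capacity {1..m} {1..n} (chan_comp {1,2} W1 W2) = Gs (Phi B a b) loW hiW"
    unfolding capW loW_def hiW_def by (rule cap_reduce[OF Im finB ab dif tW01])
  have cV: "capacity (S \<rightarrow>\<^sub>E {1..m}) {1..n} (chan_comp {1,2} (\<lambda>u y. \<Sum>s\<in>S. p s * K s (u s) y) W2)
      = Gs (Phi B a b) loV hiV"
    unfolding capV loV_def hiV_def by (rule cap_reduce[OF AVf finB ab dif tV01])
  have tWs: "tW x = (\<Sum>s\<in>S. p s * K s x 1)" if "x \<in> {1..m}" for x
    using assms(9) that unfolding tW_def by auto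
  have sub: "tW ` {1..m} \<subseteq> tV ` AV"
  proof
    fix y assume "y \<in> tW ` {1..m}"
    then obtain x where x: "x \<in> {1..m}" "y = tW x" by auto
    have "restrict (\<lambda>s. x) S \<in> AV" unfolding AV_def using x by auto
    moreover have "tV (restrict (\<lambda>s. x) S) = y" unfolding tV_def x(2) tWs[OF x(1)]
      by (intro sum.cong) auto
    ultimately show "y \<in> tV ` AV" by force
  qed
  have neW: "tW ` {1..m} \<noteq> {}" using Im by simp
  have ord: "loV \<le> loW" "loW \<le> hiW" "hiW \<le> hiV" "0 \<le> loV" "hiV \<le> 1"
  proof -
    show "loV \<le> loW" unfolding loV_def loW_def by (rule Min_antimono[OF sub neW]) (use AVf in simp)
    show "hiW \<le> hiV" unfolding hiV_def hiW_def by (rule Max_mono[OF sub neW]) (use AVf in simp)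
    have t1: "tW 1 \<in> tW ` {1..m}" using assms(1) by auto
    have "Min (tW ` {1..m}) \<le> tW 1" "tW 1 \<le> Max (tW ` {1..m})"
      using Min_le[OF _ t1] Max_ge[OF _ t1] by auto
    thus "loW \<le> hiW" unfolding loW_def hiW_def by linarith
    have "loV \<in> tV ` AV" "hiV \<in> tV ` AV" unfolding loV_def hiV_def using AVf by (auto intro!: Min_in Max_in)
    thus "0 \<le> loV" "hiV \<le> 1" using tV01 by auto
  qed
  have capiff: "Gs (Phi B a b) loV hiV = Gs (Phi B a b) loW hiW \<longleftrightarrow> loV = loW \<and> hiV = hiW"
  proof
    assume eq: "Gs (Phi B a b) loV hiV = Gs (Phi B a b) loW hiW"
    show "loV = loW \<and> hiV = hiW"
    proof (rule ccontr)
      assume "\<not> (loV = loW \<and> hiV = hiW)"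
      hence "(loW, hiW) \<noteq> (loV, hiV)" by auto
      from gap_strict[OF ord(1,2,3,4,5) this] eq show False by simp
    qed
  qed auto
  have imW: "tW ` {1..m} = (\<lambda>i. \<Sum>s\<in>S. p s * K s i 1) ` {1..m}" using tWs by (intro image_cong) auto
  have loiff: "loV = loW \<longleftrightarrow> (\<exists>i\<in>{1..m}. \<forall>s\<in>S. p s > 0 \<longrightarrow> K s i 1 = Min ((\<lambda>i. K s i 1) ` {1..m}))"
    using lo_char[OF Im assms(6) p0(1), of "\<lambda>s i. K s i 1"]
    unfolding loV_def loW_def imW AV_def tV_def by simp
  have hiiff: "hiV = hiW \<longleftrightarrow> (\<exists>i\<in>{1..m}. \<forall>s\<in>S. p s > 0 \<longrightarrow> K s i 1 = Max ((\<lambda>i. K s i 1) ` {1..m}))"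
    using hi_char[OF Im assms(6) p0(1), of "\<lambda>s i. K s i 1"]
    unfolding hiV_def hiW_def imW AV_def tV_def by simp
  have endiff: "(\<exists>i1\<in>{1..m}. \<exists>i2\<in>{1..m}. \<forall>s\<in>S. p s > 0 \<longrightarrow> ended m (K s) i1 i2) \<longleftrightarrow>
     (\<exists>i\<in>{1..m}. \<forall>s\<in>S. p s > 0 \<longrightarrow> K s i 1 = Min ((\<lambda>i. K s i 1) ` {1..m})) \<and>
     (\<exists>i\<in>{1..m}. \<forall>s\<in>S. p s > 0 \<longrightarrow> K s i 1 = Max ((\<lambda>i. K s i 1) ` {1..m}))"
  proof
    assume "\<exists>i1\<in>{1..m}. \<exists>i2\<in>{1..m}. \<forall>s\<in>S. p s > 0 \<longrightarrow> ended m (K s) i1 i2"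
    then obtain i1 i2 where "i1 \<in> {1..m}" "i2 \<in> {1..m}" "\<forall>s\<in>S. p s > 0 \<longrightarrow> ended m (K s) i1 i2" by blast
    thus "(\<exists>i\<in>{1..m}. \<forall>s\<in>S. p s > 0 \<longrightarrow> K s i 1 = Min ((\<lambda>i. K s i 1) ` {1..m})) \<and>
     (\<exists>i\<in>{1..m}. \<forall>s\<in>S. p s > 0 \<longrightarrow> K s i 1 = Max ((\<lambda>i. K s i 1) ` {1..m}))"
      unfolding ended_def by auto
  next
    assume "(\<exists>i\<in>{1..m}. \<forall>s\<in>S. p s > 0 \<longrightarrow> K s i 1 = Min ((\<lambda>i. K s i 1) ` {1..m})) \<and>
     (\<exists>i\<in>{1..m}. \<forall>s\<in>S. p s > 0 \<longrightarrow> K s i 1 = Max ((\<lambda>i. K s i 1) ` {1..m}))"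
    then obtain i1 i2 where "i1 \<in> {1..m}" "i2 \<in> {1..m}"
      "\<forall>s\<in>S. p s > 0 \<longrightarrow> K s i1 1 = Min ((\<lambda>i. K s i 1) ` {1..m})"
      "\<forall>s\<in>S. p s > 0 \<longrightarrow> K s i2 1 = Max ((\<lambda>i. K s i 1) ` {1..m})" by blast
    thus "\<exists>i1\<in>{1..m}. \<exists>i2\<in>{1..m}. \<forall>s\<in>S. p s > 0 \<longrightarrow> ended m (K s) i1 i2"
      unfolding ended_def by blast
  qed
  show ?thesis unfolding cV cW capiff loiff hiiff endiff by (rule refl)
qed

end
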